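(* There exists a universal constant $C>0$ such that the following holds. Let $0<\varepsilon<1$, $d\in\mathbb{N}$, $t=\lceil C\varepsilon^{-2}\log(2/\varepsilon)\rceil$, and let $G\in\mathbb{R}^{t\times d}$ be a Gaussian JL map. Then for every finite $P\subset\mathbb{R}^d$ with $|P|\ge3$, with probability at least $2/3$, $\operatorname{opt}_{\mathrm{max\text{-}tsp}}(G(P))$ is a $(2+\varepsilon)$-approximation of $\operatorname{opt}_{\mathrm{max\text{-}tsp}}(P)$, i.e. $$\frac{\operatorname{opt}_{\mathrm{max\text{-}tsp}}(P)}{2+\varepsilon}\le\operatorname{opt}_{\mathrm{max\text{-}tsp}}(G(P))\le(2+\varepsilon)\operatorname{opt}_{\mathrm{max\text{-}tsp}}(P).$$
   Context: Norms are Euclidean. A Gaussian JL map is a random $t\times d$ matrix with i.i.d. $\mathcal{N}(0,1/t)$ entries; $G(P)=\{Gp:p\in P\}$. For a finite point set $Q$, $\operatorname{opt}_{\mathrm{max\text{-}tsp}}(Q)$ is the maximum of $\sum_{\{p,q\}\in T}\|p-q\|$ over all Hamiltonian cycles $T$ on $Q$. *)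

theory Defs
  imports "HOL-Probability.Probability"
begin

text \<open>Vectors of R^k are represented as functions nat => real that vanish
  at all coordinates >= k.\<close>

definition vecs :: "nat \<Rightarrow> (nat \<Rightarrow> real) set" where
  "vecs k = {x. \<forall>i\<ge>k. x i = 0}"

definition edist :: "nat \<Rightarrow> (nat \<Rightarrow> real) \<Rightarrow> (nat \<Rightarrow> real) \<Rightarrow> real" where
  "edist k x y = sqrt (\<Sum>i<k. (x i - y i)\<^sup>2)"

definition opt_max_tsp :: "nat \<Rightarrow> (nat \<Rightarrow> real) set \<Rightarrow> real" where
  "opt_max_tsp k Q =
     Max ((\<lambda>f. \<Sum>i<card Q. edist k (f i) (f (Suc i mod card Q)))
            ` {f. bij_betw f {..<card Q} Q})"

definition mat_apply :: "nat \<Rightarrow> nat \<Rightarrow> (nat \<times> nat \<Rightarrow> real) \<Rightarrow> (nat \<Rightarrow> real) \<Rightarrow> (nat \<Rightarrow> real)" where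
  "mat_apply t d G p = (\<lambda>i. if i < t then (\<Sum>j<d. G (i, j) * p j) else 0)"

text \<open>Gaussian JL map: t x d matrix with i.i.d. N(0, 1/t) entries
  (standard deviation 1/sqrt t).\<close>
definition gauss_jl :: "nat \<Rightarrow> nat \<Rightarrow> (nat \<times> nat \<Rightarrow> real) measure" where
  "gauss_jl t d = PiM ({..<t} \<times> {..<d})
      (\<lambda>_. density lborel (normal_density 0 (1 / sqrt (real t))))"

end

theory Submission
  imports Defs "HOL-Combinatorics.Permutations"
begin

lemma edist_L2: "edist k x y = L2_set (\<lambda>i. x i - y i) {..<k}"
  by (simp add: edist_def L2_set_def)

lemma edist_nonneg: "0 \<le> edist k x y"
  by (simp add: edist_def sum_nonneg)

lemma edist_self[simp]: "edist k x x = 0"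
  by (simp add: edist_def)

lemma edist_sym: "edist k x y = edist k y x"
  unfolding edist_def by (simp add: power2_commute)

lemma edist_triangle: "edist k x z \<le> edist k x y + edist k y z"
proof -
  have "edist k x z = L2_set (\<lambda>i. (x i - y i) + (y i - z i)) {..<k}"
    by (simp add: edist_L2)
  also have "\<dots> \<le> edist k x y + edist k y z"
    unfolding edist_L2 by (rule L2_set_triangle_ineq)
  finally show ?thesis .
qed

definition tlen :: "nat \<Rightarrow> nat \<Rightarrow> (nat \<Rightarrow> nat \<Rightarrow> real) \<Rightarrow> real" where
  "tlen k m f = (\<Sum>i<m. edist k (f i) (f (Suc i mod m)))"

definition Dsum :: "nat \<Rightarrow> (nat \<Rightarrow> real) set \<Rightarrow> real" where
  "Dsum k Q = (\<Sum>p\<in>Q. \<Sum>q\<in>Q. edist k p q)"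

lemma sum_shift_mod:
  fixes g :: "nat \<Rightarrow> real"
  assumes "m \<ge> 1"
  shows "(\<Sum>i<m. g (Suc i mod m)) = (\<Sum>i<m. g i)"
proof -
  obtain n where m: "m = Suc n" using assms by (cases m) auto
  have "(\<Sum>i<Suc n. g (Suc i mod Suc n)) = (\<Sum>i<n. g (Suc i mod Suc n)) + g 0"
    by (simp add: sum.lessThan_Suc)
  also have "(\<Sum>i<n. g (Suc i mod Suc n)) = (\<Sum>i<n. g (Suc i))"
    by (rule sum.cong) auto
  also have "(\<Sum>i<n. g (Suc i)) + g 0 = (\<Sum>i<Suc n. g i)"
    by (subst sum.lessThan_Suc_shift) simp
  finally show ?thesis using m by simp
qed

lemma tlen_restrict: "tlen k m (restrict f {..<m}) = tlen k m f"
  unfolding tlen_def by (rule sum.cong) auto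

definition Bs :: "nat \<Rightarrow> (nat \<Rightarrow> real) set \<Rightarrow> (nat \<Rightarrow> nat \<Rightarrow> real) set" where
  "Bs m Q = {f \<in> extensional {..<m}. bij_betw f {..<m} Q}"

lemma Bs_finite: "finite Q \<Longrightarrow> finite (Bs m Q)"
proof -
  assume "finite Q"
  have "Bs m Q \<subseteq> PiE {..<m} (\<lambda>_. Q)"
    unfolding Bs_def by (auto simp: PiE_def bij_betw_def)
  moreover have "finite (PiE {..<m} (\<lambda>_. Q))"
    using \<open>finite Q\<close> by (intro finite_PiE) auto
  ultimately show ?thesis by (rule finite_subset)
qed

lemma Bs_nonempty: "finite Q \<Longrightarrow> Bs (card Q) Q \<noteq> {}"
proof -
  assume "finite Q"
  then obtain h where h: "bij_betw h {0..<card Q} Q" using ex_bij_betw_nat_finite by blast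
  then have "restrict h {..<card Q} \<in> Bs (card Q) Q"
    unfolding Bs_def by (auto simp: atLeast0LessThan bij_betw_def inj_on_def)
  then show ?thesis by blast
qed

lemma opt_img_eq:
  "tlen k m ` {f. bij_betw f {..<m} Q} = tlen k m ` Bs m Q"
proof
  show "tlen k m ` {f. bij_betw f {..<m} Q} \<subseteq> tlen k m ` Bs m Q"
  proof
    fix y assume "y \<in> tlen k m ` {f. bij_betw f {..<m} Q}"
    then obtain f where f: "bij_betw f {..<m} Q" "y = tlen k m f" by auto
    have "restrict f {..<m} \<in> Bs m Q"
      using f(1) unfolding Bs_def by (auto simp: bij_betw_def inj_on_def)
    then show "y \<in> tlen k m ` Bs m Q"
      using f(2) tlen_restrict by (metis image_eqI)
  qed
qed (auto simp: Bs_def)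

lemma opt_alt: "opt_max_tsp k Q = Max (tlen k (card Q) ` Bs (card Q) Q)"
  unfolding opt_max_tsp_def opt_img_eq[symmetric] tlen_def ..

lemma tlen_upper:
  assumes Q: "finite Q" and f: "bij_betw f {..<card Q} Q" and c: "c \<in> Q"
  shows "tlen k (card Q) f \<le> 2 * (\<Sum>q\<in>Q. edist k q c)"
proof -
  let ?m = "card Q"
  have m: "?m \<ge> 1" using c Q by (metis One_nat_def Suc_leI card_gt_0_iff empty_iff)
  have "tlen k ?m f \<le> (\<Sum>i<?m. edist k (f i) c + edist k (f (Suc i mod ?m)) c)"
    unfolding tlen_def
    by (rule sum_mono) (metis edist_sym edist_triangle)
  also have "\<dots> = (\<Sum>i<?m. edist k (f i) c) + (\<Sum>i<?m. edist k (f (Suc i mod ?m)) c)"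
    by (simp add: sum.distrib)
  also have "(\<Sum>i<?m. edist k (f (Suc i mod ?m)) c) = (\<Sum>i<?m. edist k (f i) c)"
    using sum_shift_mod[OF m, of "\<lambda>i. edist k (f i) c"] .
  also have "(\<Sum>i<?m. edist k (f i) c) = (\<Sum>q\<in>Q. edist k q c)"
    using sum.reindex_bij_betw[OF f, of "\<lambda>q. edist k q c"] .
  finally show ?thesis by simp
qed

lemma opt_upper:
  assumes Q: "finite Q" "card Q \<ge> 1"
  shows "opt_max_tsp k Q \<le> 2 * Dsum k Q / card Q"
proof -
  let ?m = "card Q"
  have "tlen k ?m f \<le> 2 * Dsum k Q / ?m" if f: "f \<in> Bs ?m Q" for f
  proof -
    have fb: "bij_betw f {..<?m} Q" using f by (simp add: Bs_def)
    have "(\<Sum>c\<in>Q. tlen k ?m f) \<le> (\<Sum>c\<in>Q. 2 * (\<Sum>q\<in>Q. edist k q c))"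
      by (rule sum_mono) (rule tlen_upper[OF Q(1) fb])
    also have "\<dots> = 2 * (\<Sum>c\<in>Q. \<Sum>q\<in>Q. edist k q c)"
      by (simp add: sum_distrib_left)
    also have "(\<Sum>c\<in>Q. \<Sum>q\<in>Q. edist k q c) = Dsum k Q"
      unfolding Dsum_def by (rule sum.swap)
    finally have "?m * tlen k ?m f \<le> 2 * Dsum k Q" by simp
    then show ?thesis using Q(2) by (simp add: field_simps)
  qed
  then show ?thesis
    unfolding opt_alt
    using Bs_finite[OF Q(1)] Bs_nonempty[OF Q(1)]
    by (intro Max.boundedI) auto
qed

lemma exists_perm01:
  fixes a b m :: nat
  assumes "a < m" "b < m" "a \<noteq> b"
  shows "\<exists>\<sigma>. \<sigma> permutes {..<m} \<and> \<sigma> a = 0 \<and> \<sigma> b = 1"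
proof -
  have m0: "0 < m" using assms by simp
  have m1: "1 < m"
  proof (rule ccontr)
    assume "\<not> 1 < m"
    then have "m \<le> 1" by simp
    then have "a = 0" "b = 0" using assms by auto
    then show False using assms by simp
  qed
  note m = m0 m1
  define s1 where "s1 = Transposition.transpose a 0"
  define s where "s = Transposition.transpose (s1 b) 1 \<circ> s1"
  have p1: "s1 permutes {..<m}" unfolding s1_def using assms m by (intro permutes_swap_id) auto
  have s1a: "s1 a = 0" by (simp add: s1_def)
  have s1b: "s1 b \<noteq> 0" using assms unfolding s1_def Transposition.transpose_def by auto
  have s1bm: "s1 b < m" using p1 assms permutes_in_image by fastforce
  have "s permutes {..<m}" unfolding s_def
    using p1 s1bm m by (intro permutes_compose permutes_swap_id) auto
  moreover have "s a = 0" unfolding s_def using s1a s1b by simp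
  moreover have "s b = 1" unfolding s_def by simp
  ultimately show ?thesis by blast
qed

lemma sum_Bs_swap:
  assumes "a < m" "b < m" "a \<noteq> b"
  shows "(\<Sum>f\<in>Bs m Q. edist k (f a) (f b)) = (\<Sum>f\<in>Bs m Q. edist k (f 0) (f 1))"
proof -
  obtain s where s: "s permutes {..<m}" "s a = 0" "s b = 1" using exists_perm01[OF assms] by blast
  have si: "inv s permutes {..<m}" using s(1) by (rule permutes_inv)
  have sb: "bij_betw s {..<m} {..<m}" using s(1) by (rule permutes_imp_bij)
  have sib: "bij_betw (inv s) {..<m} {..<m}" using si by (rule permutes_imp_bij)
  define J :: "(nat \<Rightarrow> nat \<Rightarrow> real) \<Rightarrow> nat \<Rightarrow> nat \<Rightarrow> real" where "J = (\<lambda>f. restrict (f \<circ> s) {..<m})"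
  define I :: "(nat \<Rightarrow> nat \<Rightarrow> real) \<Rightarrow> nat \<Rightarrow> nat \<Rightarrow> real" where "I = (\<lambda>f. restrict (f \<circ> inv s) {..<m})"
  have sin: "s x \<in> {..<m}" if "x < m" for x using s(1) that permutes_in_image by fastforce
  have siin: "inv s x \<in> {..<m}" if "x < m" for x using si that permutes_in_image by fastforce
  have JB: "J f \<in> Bs m Q" if "f \<in> Bs m Q" for f
  proof -
    have "bij_betw (f \<circ> s) {..<m} Q" using that sb unfolding Bs_def by (auto intro: bij_betw_trans)
    then show ?thesis unfolding Bs_def J_def by (auto simp: bij_betw_def inj_on_def)
  qed
  have IB: "I f \<in> Bs m Q" if "f \<in> Bs m Q" for f
  proof -
    have "bij_betw (f \<circ> inv s) {..<m} Q" using that sib unfolding Bs_def by (auto intro: bij_betw_trans)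
    then show ?thesis unfolding Bs_def I_def by (auto simp: bij_betw_def inj_on_def)
  qed
  have IJ: "I (J f) = f" if "f \<in> Bs m Q" for f
  proof
    fix x show "I (J f) x = f x"
      using that siin[of x] unfolding I_def J_def Bs_def
      by (auto simp: permutes_inverses[OF s(1)] extensional_def)
  qed
  have JI: "J (I f) = f" if "f \<in> Bs m Q" for f
  proof
    fix x show "J (I f) x = f x"
      using that sin[of x] unfolding I_def J_def Bs_def
      by (auto simp: permutes_inverses[OF s(1)] extensional_def)
  qed
  have "(\<Sum>f\<in>Bs m Q. edist k (f 0) (f 1)) = (\<Sum>f\<in>Bs m Q. edist k (f a) (f b))"
  proof (rule sum.reindex_bij_witness[where i=I and j=J])
    fix f assume "f \<in> Bs m Q"
    then show "edist k (J f a) (J f b) = edist k (f 0) (f 1)"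
      using assms s unfolding J_def by simp
  qed (auto simp: IJ JI IB JB)
  then show ?thesis by simp
qed

lemma opt_lower:
  assumes Q: "finite Q" "card Q \<ge> 2"
  shows "Dsum k Q / (real (card Q) - 1) \<le> opt_max_tsp k Q"
proof -
  let ?m = "card Q"
  let ?B = "Bs ?m Q"
  define K where "K = (\<Sum>f\<in>?B. edist k (f 0) (f 1))"
  have fin: "finite ?B" using Bs_finite[OF Q(1)] .
  have ne: "?B \<noteq> {}" using Bs_nonempty[OF Q(1)] .
  have m2: "?m \<ge> 2" using Q by simp
  have "(\<Sum>f\<in>?B. tlen k ?m f) = (\<Sum>i<?m. \<Sum>f\<in>?B. edist k (f i) (f (Suc i mod ?m)))"
    unfolding tlen_def by (rule sum.swap)
  also have "\<dots> = (\<Sum>i<?m. K)"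
  proof (rule sum.cong[OF refl])
    fix i assume i: "i \<in> {..<?m}"
    have "i \<noteq> Suc i mod ?m"
    proof (cases "Suc i < ?m")
      case True then show ?thesis by simp
    next
      case False
      then have "Suc i = ?m" using i by simp
      then have "Suc i mod ?m = 0" by simp
      then show ?thesis using m2 \<open>Suc i = ?m\<close> by auto
    qed
    then show "(\<Sum>f\<in>?B. edist k (f i) (f (Suc i mod ?m))) = K"
      unfolding K_def using i m2 by (intro sum_Bs_swap) auto
  qed
  finally have S1: "(\<Sum>f\<in>?B. tlen k ?m f) = ?m * K" by simp
  have "(\<Sum>f\<in>?B. \<Sum>a<?m. \<Sum>b<?m. edist k (f a) (f b)) = (\<Sum>f\<in>?B. Dsum k Q)"
  proof (rule sum.cong[OF refl])
    fix f assume f: "f \<in> ?B"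
    then have fb: "bij_betw f {..<?m} Q" by (simp add: Bs_def)
    have "(\<Sum>a<?m. \<Sum>b<?m. edist k (f a) (f b)) = (\<Sum>a<?m. \<Sum>q\<in>Q. edist k (f a) q)"
      by (rule sum.cong[OF refl]) (rule sum.reindex_bij_betw[OF fb])
    also have "\<dots> = (\<Sum>p\<in>Q. \<Sum>q\<in>Q. edist k p q)"
      by (rule sum.reindex_bij_betw[OF fb])
    finally show "(\<Sum>a<?m. \<Sum>b<?m. edist k (f a) (f b)) = Dsum k Q" by (simp add: Dsum_def)
  qed
  moreover have "(\<Sum>f\<in>?B. \<Sum>a<?m. \<Sum>b<?m. edist k (f a) (f b)) = (\<Sum>a<?m. \<Sum>b<?m. \<Sum>f\<in>?B. edist k (f a) (f b))"
    by (subst sum.swap, subst (2) sum.swap, rule refl)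
  moreover have "(\<Sum>a<?m. \<Sum>b<?m. \<Sum>f\<in>?B. edist k (f a) (f b)) = (\<Sum>a<?m. (real ?m - 1) * K)"
  proof (rule sum.cong[OF refl])
    fix a assume a: "a \<in> {..<?m}"
    have "(\<Sum>b<?m. \<Sum>f\<in>?B. edist k (f a) (f b)) = (\<Sum>b\<in>{..<?m} - {a}. \<Sum>f\<in>?B. edist k (f a) (f b))"
      using a by (intro sum.mono_neutral_right) auto
    also have "\<dots> = (\<Sum>b\<in>{..<?m} - {a}. K)"
      unfolding K_def using a by (intro sum.cong[OF refl] sum_Bs_swap) auto
    also have "\<dots> = (real ?m - 1) * K" using a by (simp add: card_Diff_singleton)
    finally show "(\<Sum>b<?m. \<Sum>f\<in>?B. edist k (f a) (f b)) = (real ?m - 1) * K" .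
  qed
  ultimately have "card ?B * Dsum k Q = ?m * ((real ?m - 1) * K)" by simp
  then have S2: "(\<Sum>f\<in>?B. tlen k ?m f) = card ?B * (Dsum k Q / (real ?m - 1))"
    using S1 m2 by (simp add: field_simps of_nat_diff)
  have "\<exists>f\<in>?B. Dsum k Q / (real ?m - 1) \<le> tlen k ?m f"
  proof (rule ccontr)
    assume "\<not> ?thesis"
    then have "\<forall>f\<in>?B. tlen k ?m f < Dsum k Q / (real ?m - 1)" by auto
    then have "(\<Sum>f\<in>?B. tlen k ?m f) < (\<Sum>f\<in>?B. Dsum k Q / (real ?m - 1))"
      using fin ne by (intro sum_strict_mono) auto
    then show False using S2 by simp
  qed
  then obtain f where f: "f \<in> ?B" "Dsum k Q / (real ?m - 1) \<le> tlen k ?m f" by blast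
  have "tlen k ?m f \<le> Max (tlen k ?m ` ?B)"
    using fin f(1) by (intro Max_ge) auto
  then show ?thesis unfolding opt_alt using f(2) by simp
qed



definition rowv :: "nat \<Rightarrow> (nat \<Rightarrow> real) \<Rightarrow> nat \<Rightarrow> (nat \<times> nat \<Rightarrow> real) \<Rightarrow> real" where
  "rowv d x i G = (\<Sum>j<d. G (i, j) * x j)"

definition nrm :: "nat \<Rightarrow> (nat \<Rightarrow> real) \<Rightarrow> real" where
  "nrm d x = sqrt (\<Sum>j<d. (x j)\<^sup>2)"

lemma prob_space_gauss_jl: "0 < t \<Longrightarrow> prob_space (gauss_jl t d)"
  unfolding gauss_jl_def by (intro prob_space_PiM prob_space_normal_density) auto

locale gjl =
  fixes t d :: nat
  assumes tpos: "0 < t"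
begin

definition "sg = 1 / sqrt (real t)"
definition "NN = density lborel (normal_density 0 sg)"
definition "IJ = {..<t} \<times> {..<d}"

lemma sg_pos: "0 < sg" unfolding sg_def using tpos by (intro divide_pos_pos) auto
lemma sg_sq: "sg\<^sup>2 = 1 / real t" using tpos by (simp add: sg_def power_divide)

lemma Mdef: "gauss_jl t d = PiM IJ (\<lambda>_. NN)"
  by (simp add: gauss_jl_def NN_def IJ_def sg_def)

lemma sets_NN[simp]: "sets NN = sets borel" by (simp add: NN_def)

lemma prob_NN: "prob_space NN" unfolding NN_def using sg_pos by (rule prob_space_normal_density)

end

sublocale gjl \<subseteq> prob_space "gauss_jl t d"
  by (rule prob_space_gauss_jl[OF tpos])

context gjl
begin

lemma coord_meas_NN: "k \<in> IJ \<Longrightarrow> (\<lambda>G. G k) \<in> measurable (gauss_jl t d) NN"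
  unfolding Mdef by (rule measurable_component_singleton)

lemma coord_meas: "k \<in> IJ \<Longrightarrow> (\<lambda>G. G k) \<in> borel_measurable (gauss_jl t d)"
  using coord_meas_NN measurable_cong_sets[OF refl sets_NN] by blast

lemma coord_distr: "k \<in> IJ \<Longrightarrow> distr (gauss_jl t d) borel (\<lambda>G. G k) = NN"
proof -
  assume k: "k \<in> IJ"
  have "distr (gauss_jl t d) borel (\<lambda>G. G k) = distr (gauss_jl t d) NN (\<lambda>G. G k)"
    by (rule distr_cong) auto
  also have "\<dots> = NN" unfolding Mdef using k prob_NN by (intro distr_PiM_component) auto
  finally show ?thesis .
qed

lemma coord_distributed:
  "k \<in> IJ \<Longrightarrow> distributed (gauss_jl t d) lborel (\<lambda>G. G k) (normal_density 0 sg)"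
proof -
  assume k: "k \<in> IJ"
  have "distr (gauss_jl t d) lborel (\<lambda>G. G k) = distr (gauss_jl t d) borel (\<lambda>G. G k)"
    by (rule distr_cong) auto
  then show ?thesis
    unfolding distributed_def using coord_distr[OF k] coord_meas[OF k]
    by (auto simp: NN_def measurable_cong_sets[OF refl sets_lborel])
qed

lemma coord_indep: "indep_vars (\<lambda>_. borel) (\<lambda>k G. G k) IJ"
proof (cases "IJ = {}")
  case True then show ?thesis by (simp add: indep_vars_def indep_sets_def)
next
  case False
  have "distr (gauss_jl t d) (PiM IJ (\<lambda>_. borel)) (\<lambda>x. \<lambda>i\<in>IJ. x i) = distr (gauss_jl t d) (gauss_jl t d) (\<lambda>x. x)"
    by (rule distr_cong) (auto simp: Mdef space_PiM intro!: sets_PiM_cong)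
  also have "\<dots> = PiM IJ (\<lambda>_. NN)" by (simp add: Mdef)
  also have "\<dots> = PiM IJ (\<lambda>i. distr (gauss_jl t d) borel (\<lambda>x. x i))"
    by (rule PiM_cong) (auto simp: coord_distr)
  finally show ?thesis
    using False coord_meas by (subst indep_vars_iff_distr_eq_PiM') auto
qed

lemma blocks_indep:
  assumes K: "\<And>l. l \<in> L \<Longrightarrow> K l \<subseteq> IJ" and disj: "disjoint_family_on K L"
  and Y: "\<And>l. l \<in> L \<Longrightarrow> Y l \<in> borel_measurable (PiM (K l) (\<lambda>_. borel))"
  and eq: "\<And>l G. l \<in> L \<Longrightarrow> Z l G = Y l (restrict G (K l))"
  shows "indep_vars (\<lambda>_. borel) Z L"
proof -
  have "indep_vars (\<lambda>j. PiM (K j) (\<lambda>_. borel)) (\<lambda>j \<omega>. restrict (\<lambda>i. \<omega> i) (K j)) L"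
    using indep_vars_restrict[OF coord_indep K disj] .
  then have "indep_vars (\<lambda>_. borel) (\<lambda>l \<omega>. Y l (restrict (\<lambda>i. \<omega> i) (K l))) L"
    by (rule indep_vars_compose2) (rule Y)
  then show ?thesis
    by (rule iffD1[OF indep_vars_cong, rotated 3]) (auto simp: eq fun_eq_iff)
qed

lemma row_distributed:
  assumes i: "i < t" and x: "0 < nrm d x"
  shows "distributed (gauss_jl t d) lborel (rowv d x i) (normal_density 0 (sg * nrm d x))"
proof -
  define J where "J = {j. j < d \<and> x j \<noteq> 0}"
  have finJ: "finite J" unfolding J_def by simp
  have Jne: "J \<noteq> {}"
  proof
    assume "J = {}"
    then have "\<forall>j<d. x j = 0" unfolding J_def by auto
    then have "nrm d x = 0" unfolding nrm_def by simp
    then show False using x by simp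
  qed
  have rJ: "rowv d x i = (\<lambda>G. \<Sum>j\<in>J. x j * G (i, j))"
  proof
    fix G
    show "rowv d x i G = (\<Sum>j\<in>J. x j * G (i, j))"
      unfolding rowv_def J_def
      by (rule sum.mono_neutral_cong_right) (auto simp: mult.commute)
  qed
  have ind: "indep_vars (\<lambda>_. borel) (\<lambda>j G. x j * G (i, j)) J"
  proof (rule blocks_indep[where K="\<lambda>j. {(i,j)}" and Y="\<lambda>j h. x j * h (i,j)"])
    show "\<And>l. l \<in> J \<Longrightarrow> {(i, l)} \<subseteq> IJ" using i by (auto simp: J_def IJ_def)
    show "disjoint_family_on (\<lambda>j. {(i, j)}) J" by (auto simp: disjoint_family_on_def)
    show "\<And>l. l \<in> J \<Longrightarrow> (\<lambda>h. x l * h (i, l)) \<in> borel_measurable (Pi\<^sub>M {(i, l)} (\<lambda>_. borel))"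
      by measurable
  qed auto
  have dj: "distributed (gauss_jl t d) lborel (\<lambda>G. x j * G (i, j)) (normal_density 0 (\<bar>x j\<bar> * sg))"
    if j: "j \<in> J" for j
  proof -
    have "(i,j) \<in> IJ" using i j by (auto simp: J_def IJ_def)
    from normal_density_affine[OF coord_distributed[OF this] sg_pos, of "x j" 0]
    show ?thesis using j by (simp add: J_def)
  qed
  have "distributed (gauss_jl t d) lborel (\<lambda>G. \<Sum>j\<in>J. x j * G (i, j))
          (normal_density (\<Sum>j\<in>J. 0) (sqrt (\<Sum>j\<in>J. (\<bar>x j\<bar> * sg)\<^sup>2)))"
    using finJ Jne ind sg_pos dj by (intro sum_indep_normal) (auto simp: J_def)
  moreover have "sqrt (\<Sum>j\<in>J. (\<bar>x j\<bar> * sg)\<^sup>2) = sg * nrm d x"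
  proof -
    have "(\<Sum>j\<in>J. (\<bar>x j\<bar> * sg)\<^sup>2) = sg\<^sup>2 * (\<Sum>j<d. (x j)\<^sup>2)"
      unfolding sum_distrib_left J_def
      by (rule sum.mono_neutral_cong_left) (auto simp: power_mult_distrib mult.commute)
    then show ?thesis using sg_pos by (simp add: nrm_def real_sqrt_mult)
  qed
  ultimately show ?thesis using rJ by simp
qed

lemma rows_indep:
  assumes "\<And>i. i < t \<Longrightarrow> f i \<in> borel_measurable borel"
  shows "indep_vars (\<lambda>_. borel) (\<lambda>i G. f i (rowv d x i G)) {..<t}"
proof (rule blocks_indep[where K="\<lambda>i. {i} \<times> {..<d}" and Y="\<lambda>i h. f i (\<Sum>j<d. h (i, j) * x j)"])
  show "\<And>l. l \<in> {..<t} \<Longrightarrow> {l} \<times> {..<d} \<subseteq> IJ" by (auto simp: IJ_def)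
  show "disjoint_family_on (\<lambda>i. {i} \<times> {..<d}) {..<t}" by (auto simp: disjoint_family_on_def)
  show "\<And>l. l \<in> {..<t} \<Longrightarrow> (\<lambda>h. f l (\<Sum>j<d. h (l, j) * x j)) \<in> borel_measurable (Pi\<^sub>M ({l} \<times> {..<d}) (\<lambda>_. borel))"
    using assms by measurable
  show "\<And>l G. l \<in> {..<t} \<Longrightarrow> f l (rowv d x l G) = f l (\<Sum>j<d. restrict G ({l} \<times> {..<d}) (l, j) * x j)"
    by (simp add: rowv_def)
qed

lemma normal_moments:
  assumes D: "distributed (gauss_jl t d) lborel X (normal_density 0 \<sigma>)" and s: "0 < \<sigma>"
  shows "integrable (gauss_jl t d) (\<lambda>G. X G ^ n)"
    and "expectation (\<lambda>G. X G ^ 2) = \<sigma>\<^sup>2"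
    and "expectation (\<lambda>G. X G ^ 4) = 3 * \<sigma>^4"
proof -
  show "integrable (gauss_jl t d) (\<lambda>G. X G ^ n)"
    using integrable_normal_moment[where \<mu>=0 and \<sigma>=\<sigma> and k=n, OF s]
    by (simp, subst distributed_integrable[OF D, of "\<lambda>x. x ^ n", symmetric]) auto
  have "expectation (\<lambda>G. X G ^ (2 * 1)) = fact (2 * 1) / ((2 / \<sigma>\<^sup>2)^1 * fact 1)"
    using integral_normal_moment_even[where \<mu>=0 and \<sigma>=\<sigma> and k=1, OF s]
    by (subst distributed_integral[OF D, of "\<lambda>x. x ^ (2*1)", symmetric]) auto
  then show "expectation (\<lambda>G. X G ^ 2) = \<sigma>\<^sup>2" using s by simp
  have "expectation (\<lambda>G. X G ^ (2 * 2)) = fact (2 * 2) / ((2 / \<sigma>\<^sup>2)^2 * fact 2)"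
    using integral_normal_moment_even[where \<mu>=0 and \<sigma>=\<sigma> and k=2, OF s]
    by (subst distributed_integral[OF D, of "\<lambda>x. x ^ (2*2)", symmetric]) auto
  then show "expectation (\<lambda>G. X G ^ 4) = 3 * \<sigma>^4"
    using s by (simp add: fact_numeral power_divide field_simps)
qed

definition Yv :: "(nat \<Rightarrow> real) \<Rightarrow> (nat \<times> nat \<Rightarrow> real) \<Rightarrow> real" where
  "Yv x G = (\<Sum>i<t. (rowv d x i G)\<^sup>2)"

lemma row_meas[measurable]: "rowv d x i \<in> borel_measurable (gauss_jl t d)"
proof (cases "i < t")
  case True
  then have "\<And>j. j < d \<Longrightarrow> (\<lambda>G. G (i, j)) \<in> borel_measurable (gauss_jl t d)"
    by (intro coord_meas) (auto simp: IJ_def)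
  then show ?thesis unfolding rowv_def by (intro borel_measurable_sum borel_measurable_times) auto
next
  case False
  have "rowv d x i = (\<lambda>G. \<Sum>j<d. G (i, j) * x j)" by (simp add: rowv_def fun_eq_iff)
  show ?thesis
  proof (cases "d = 0")
    case True then show ?thesis unfolding rowv_def by simp
  next
    case False
    (* coordinates outside IJ are constant on the space *)
    have "\<And>j. (\<lambda>G. G (i, j)) \<in> borel_measurable (gauss_jl t d)"
    proof -
      fix j
      have "\<And>G. G \<in> space (gauss_jl t d) \<Longrightarrow> G (i, j) = undefined"
        using \<open>\<not> i < t\<close> by (auto simp: Mdef space_PiM PiE_def extensional_def IJ_def)
      then show "(\<lambda>G. G (i, j)) \<in> borel_measurable (gauss_jl t d)"
        by (subst measurable_cong[where g="\<lambda>_. undefined"]) auto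
    qed
    then show ?thesis unfolding rowv_def by (intro borel_measurable_sum borel_measurable_times) auto
  qed
qed

lemma Y_meas[measurable]: "Yv x \<in> borel_measurable (gauss_jl t d)"
  unfolding Yv_def by measurable

lemma Y_second_moment:
  assumes x: "0 < nrm d x"
  shows "integrable (gauss_jl t d) (\<lambda>G. (Yv x G - (nrm d x)\<^sup>2)\<^sup>2)"
    and "expectation (\<lambda>G. (Yv x G - (nrm d x)\<^sup>2)\<^sup>2) = 2 * (nrm d x)^4 / t"
proof -
  define \<sigma> where "\<sigma> = sg * nrm d x"
  have s: "0 < \<sigma>" unfolding \<sigma>_def using sg_pos x by simp
  have s2: "\<sigma>\<^sup>2 = (nrm d x)\<^sup>2 / t" unfolding \<sigma>_def using sg_sq by (simp add: power_mult_distrib)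
  define Z where "Z = (\<lambda>i G. (rowv d x i G)\<^sup>2 - \<sigma>\<^sup>2)"
  have D: "distributed (gauss_jl t d) lborel (rowv d x i) (normal_density 0 \<sigma>)" if "i < t" for i
    unfolding \<sigma>_def using row_distributed[OF that x] .
  note mom = normal_moments[OF D s]
  have intZ: "integrable (gauss_jl t d) (Z i)" if "i < t" for i
    unfolding Z_def using mom(1)[OF that, of 2] by simp
  have EZ: "expectation (Z i) = 0" if "i < t" for i
    unfolding Z_def using mom(1)[OF that, of 2] mom(2)[OF that] by (simp add: prob_space)
  have intZZ: "integrable (gauss_jl t d) (\<lambda>G. Z i G * Z j G)" if "i < t" "j < t" for i j
  proof -
    have eq: "(\<lambda>G. Z i G * Z j G) = (\<lambda>G. (rowv d x i G)\<^sup>2 * (rowv d x j G)\<^sup>2 - \<sigma>\<^sup>2 * (rowv d x i G)\<^sup>2 - \<sigma>\<^sup>2 * (rowv d x j G)\<^sup>2 + \<sigma>\<^sup>2 * \<sigma>\<^sup>2)"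
      unfolding Z_def by (simp add: fun_eq_iff algebra_simps)
    have ij: "integrable (gauss_jl t d) (\<lambda>G. (rowv d x i G)\<^sup>2 * (rowv d x j G)\<^sup>2)"
    proof (rule Bochner_Integration.integrable_bound[where f="\<lambda>G. ((rowv d x i G)^4 + (rowv d x j G)^4)"])
      show "integrable (gauss_jl t d) (\<lambda>G. (rowv d x i G)^4 + (rowv d x j G)^4)"
        using mom(1)[OF that(1), of 4] mom(1)[OF that(2), of 4] by simp
      show "AE G in gauss_jl t d. norm ((rowv d x i G)\<^sup>2 * (rowv d x j G)\<^sup>2) \<le> norm ((rowv d x i G)^4 + (rowv d x j G)^4)"
      proof (rule AE_I2)
        fix G
        have "2 * ((rowv d x i G)\<^sup>2 * (rowv d x j G)\<^sup>2) \<le> (rowv d x i G)^4 + (rowv d x j G)^4"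
          using sum_squares_bound[of "(rowv d x i G)\<^sup>2" "(rowv d x j G)\<^sup>2"]
          by (simp add: power2_eq_square power4_eq_xxxx mult.assoc)
        moreover have "0 \<le> (rowv d x i G)\<^sup>2 * (rowv d x j G)\<^sup>2" by simp
        ultimately show "norm ((rowv d x i G)\<^sup>2 * (rowv d x j G)\<^sup>2) \<le> norm ((rowv d x i G)^4 + (rowv d x j G)^4)"
          by (simp only: real_norm_def; arith)
      qed
    qed measurable
    show ?thesis unfolding eq
      using ij mom(1)[OF that(1), of 2] mom(1)[OF that(2), of 2] by simp
  qed
  have EZZ: "expectation (\<lambda>G. Z i G * Z j G) = (if i = j then 2 * \<sigma>^4 else 0)" if "i < t" "j < t" for i j
  proof (cases "i = j")
    case True
    have eq: "(\<lambda>G. Z i G * Z i G) = (\<lambda>G. (rowv d x i G)^4 - 2 * \<sigma>\<^sup>2 * (rowv d x i G)\<^sup>2 + \<sigma>^4)"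
      unfolding Z_def by (simp add: fun_eq_iff algebra_simps power2_eq_square power4_eq_xxxx)
    have "expectation (\<lambda>G. (rowv d x i G)^4 - 2 * \<sigma>\<^sup>2 * (rowv d x i G)\<^sup>2 + \<sigma>^4) = 3 * \<sigma>^4 - 2 * \<sigma>\<^sup>2 * \<sigma>\<^sup>2 + \<sigma>^4"
      using mom(1)[OF that(1), of 4] mom(1)[OF that(1), of 2] mom(2)[OF that(1)] mom(3)[OF that(1)]
      by (simp add: prob_space)
    then show ?thesis using True eq by (simp add: power2_eq_square power4_eq_xxxx)
  next
    case False
    have ind: "indep_vars (\<lambda>_. borel) Z {..<t}"
      unfolding Z_def by (rule rows_indep) auto
    then have ind2: "indep_vars (\<lambda>_. borel) Z {i, j}"
      by (rule indep_vars_subset) (use that in auto)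
    have "expectation (\<lambda>G. \<Prod>k\<in>{i,j}. Z k G) = (\<Prod>k\<in>{i,j}. expectation (Z k))"
      by (rule indep_vars_lebesgue_integral[OF _ ind2]) (use that intZ in auto)
    then show ?thesis using False EZ that by simp
  qed
  have sumZ: "Yv x G - (nrm d x)\<^sup>2 = (\<Sum>i<t. Z i G)" for G
  proof -
    have "(\<Sum>i<t. Z i G) = Yv x G - t * \<sigma>\<^sup>2" unfolding Z_def Yv_def by (simp add: sum_subtractf)
    also have "t * \<sigma>\<^sup>2 = (nrm d x)\<^sup>2" using s2 tpos by simp
    finally show ?thesis by simp
  qed
  have sq: "(Yv x G - (nrm d x)\<^sup>2)\<^sup>2 = (\<Sum>i<t. \<Sum>j<t. Z i G * Z j G)" for G
    unfolding sumZ by (simp only: power2_eq_square sum_product)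
  have intI: "integrable (gauss_jl t d) (\<lambda>G. \<Sum>j<t. Z i G * Z j G)" if "i < t" for i
    using intZZ that by (intro Bochner_Integration.integrable_sum) auto
  show "integrable (gauss_jl t d) (\<lambda>G. (Yv x G - (nrm d x)\<^sup>2)\<^sup>2)"
    unfolding sq by (rule Bochner_Integration.integrable_sum) (use intI in auto)
  have "expectation (\<lambda>G. (Yv x G - (nrm d x)\<^sup>2)\<^sup>2) = expectation (\<lambda>G. \<Sum>i<t. \<Sum>j<t. Z i G * Z j G)"
    unfolding sq ..
  also have "\<dots> = (\<Sum>i<t. expectation (\<lambda>G. \<Sum>j<t. Z i G * Z j G))"
    by (rule Bochner_Integration.integral_sum) (use intI in auto)
  also have "\<dots> = (\<Sum>i<t. \<Sum>j<t. expectation (\<lambda>G. Z i G * Z j G))"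
    by (rule sum.cong[OF refl], rule Bochner_Integration.integral_sum) (use intZZ in auto)
  also have "\<dots> = (\<Sum>i<t. \<Sum>j<t. (if i = j then 2 * \<sigma>^4 else 0))"
    using EZZ by (intro sum.cong) auto
  also have "\<dots> = t * (2 * \<sigma>^4)" by simp
  also have "\<dots> = 2 * (nrm d x)^4 / t"
  proof -
    have e: "real t * \<sigma>\<^sup>2 = (nrm d x)\<^sup>2" using s2 tpos by simp
    have "real t * (2 * \<sigma>^4) = 2 * (real t * \<sigma>\<^sup>2)\<^sup>2 / real t"
      using tpos by (simp add: power2_eq_square power4_eq_xxxx field_simps)
    also have "\<dots> = 2 * (nrm d x)^4 / t" unfolding e by simp
    finally show ?thesis .
  qed
  finally show "expectation (\<lambda>G. (Yv x G - (nrm d x)\<^sup>2)\<^sup>2) = 2 * (nrm d x)^4 / t" .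
qed

lemma row_null:
  assumes x: "0 < nrm d x"
  shows "{G \<in> space (gauss_jl t d). rowv d x 0 G = 0} \<in> null_sets (gauss_jl t d)"
proof -
  have D: "distributed (gauss_jl t d) lborel (rowv d x 0) (normal_density 0 (sg * nrm d x))"
    using row_distributed[OF tpos x] .
  have "emeasure (gauss_jl t d) (rowv d x 0 -` {0} \<inter> space (gauss_jl t d)) =
        (\<integral>\<^sup>+y. ennreal (normal_density 0 (sg * nrm d x) y) * indicator {0} y \<partial>lborel)"
    by (rule distributed_emeasure[OF D]) simp
  also have "\<dots> = 0"
  proof -
    have meas: "(\<lambda>y. ennreal (normal_density 0 (sg * nrm d x) y) * indicator {0} y) \<in> borel_measurable lborel"
      by measurable
    show ?thesis unfolding nn_integral_0_iff_AE[OF meas]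
      using AE_lborel_singleton[of "0::real"] by eventually_elim auto
  qed
  finally have "emeasure (gauss_jl t d) (rowv d x 0 -` {0} \<inter> space (gauss_jl t d)) = 0" by simp
  moreover have "rowv d x 0 -` {0} \<inter> space (gauss_jl t d) = {G \<in> space (gauss_jl t d). rowv d x 0 G = 0}" by auto
  ultimately show ?thesis by (intro null_setsI) (auto, measurable)
qed

end



lemma tlen_nonneg: "0 \<le> tlen k m f"
  unfolding tlen_def by (intro sum_nonneg) (simp add: edist_nonneg)

definition Gs :: "'a set \<Rightarrow> (nat \<times> (nat \<Rightarrow> 'a)) set" where
  "Gs P = Sigma {..card P} (\<lambda>n. PiE {..<n} (\<lambda>_. P))"

definition goodg :: "'a set \<Rightarrow> ('a \<Rightarrow> nat \<Rightarrow> real) \<Rightarrow> nat \<Rightarrow> (nat \<Rightarrow> 'a) \<Rightarrow> bool" where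
  "goodg P w n g \<longleftrightarrow> inj_on (\<lambda>i. w (g i)) {..<n} \<and> (\<lambda>i. w (g i)) ` {..<n} = w ` P"

definition Hval :: "nat \<Rightarrow> 'a set \<Rightarrow> ('a \<Rightarrow> nat \<Rightarrow> real) \<Rightarrow> nat \<times> (nat \<Rightarrow> 'a) \<Rightarrow> real" where
  "Hval k P w ng = (if goodg P w (fst ng) (snd ng) then tlen k (fst ng) (\<lambda>i. w (snd ng i)) else -1)"

lemma Gs_finite: "finite P \<Longrightarrow> finite (Gs P)"
  unfolding Gs_def by (intro finite_SigmaI finite_PiE) auto

lemma tlen_cong: "(\<And>i. i < m \<Longrightarrow> f i = g i) \<Longrightarrow> tlen k m f = tlen k m g"
  unfolding tlen_def by (intro sum.cong refl) auto

lemma opt_image_formula: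
  assumes P: "finite P"
  shows "opt_max_tsp k (w ` P) = Max (Hval k P w ` Gs P)"
proof -
  let ?Q = "w ` P"
  let ?m = "card ?Q"
  let ?L = "tlen k ?m ` Bs ?m ?Q"
  have Qf: "finite ?Q" using P by simp
  have Lf: "finite ?L" using Bs_finite[OF Qf] by simp
  have Lne: "?L \<noteq> {}" using Bs_nonempty[OF Qf] by simp
  have Hf: "finite (Hval k P w ` Gs P)" using Gs_finite[OF P] by simp
  have LH: "?L \<subseteq> Hval k P w ` Gs P"
  proof
    fix y assume "y \<in> ?L"
    then obtain f where f: "f \<in> Bs ?m ?Q" "y = tlen k ?m f" by auto
    have fb: "bij_betw f {..<?m} ?Q" using f(1) by (simp add: Bs_def)
    define g where "g = restrict (\<lambda>i. inv_into P w (f i)) {..<?m}"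
    have fi: "f i \<in> ?Q" if "i < ?m" for i using fb that by (auto simp: bij_betw_def)
    have wg: "w (g i) = f i" if "i < ?m" for i
      using fi[OF that] that by (simp add: g_def f_inv_into_f)
    have gP: "g \<in> PiE {..<?m} (\<lambda>_. P)"
      using fi by (auto simp: g_def inv_into_into)
    have mle: "?m \<le> card P" using P by (rule card_image_le)
    have good: "goodg P w ?m g"
    proof -
      have "inj_on (\<lambda>i. w (g i)) {..<?m}"
        using fb wg by (auto simp: bij_betw_def inj_on_def)
      moreover have "(\<lambda>i. w (g i)) ` {..<?m} = ?Q"
        using fb wg by (auto simp: bij_betw_def image_def)
      ultimately show ?thesis by (simp add: goodg_def)
    qed
    have "Hval k P w (?m, g) = tlen k ?m (\<lambda>i. w (g i))" using good by (simp add: Hval_def)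
    also have "\<dots> = tlen k ?m f" by (rule tlen_cong) (simp add: wg)
    finally have "Hval k P w (?m, g) = y" using f(2) by simp
    moreover have "(?m, g) \<in> Gs P" using gP mle by (simp add: Gs_def)
    ultimately show "y \<in> Hval k P w ` Gs P" by force
  qed
  have HL: "z \<in> ?L \<or> z = -1" if "z \<in> Hval k P w ` Gs P" for z
  proof -
    obtain n g where ng: "(n, g) \<in> Gs P" "z = Hval k P w (n, g)" using \<open>z \<in> _\<close> by auto
    show ?thesis
    proof (cases "goodg P w n g")
      case False then show ?thesis using ng by (simp add: Hval_def)
    next
      case True
      then have inj: "inj_on (\<lambda>i. w (g i)) {..<n}" and im: "(\<lambda>i. w (g i)) ` {..<n} = ?Q"
        by (auto simp: goodg_def)
      have n: "n = ?m" using card_image[OF inj] im by simp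
      have "bij_betw (\<lambda>i. w (g i)) {..<n} ?Q" using inj im by (simp add: bij_betw_def)
      then have "restrict (\<lambda>i. w (g i)) {..<n} \<in> Bs ?m ?Q"
        using n by (auto simp: Bs_def bij_betw_def inj_on_def)
      moreover have "z = tlen k ?m (restrict (\<lambda>i. w (g i)) {..<n})"
        using ng True n by (simp add: Hval_def tlen_restrict)
      ultimately show ?thesis by auto
    qed
  qed
  have "Max (Hval k P w ` Gs P) \<le> Max ?L"
  proof -
    have "Max (Hval k P w ` Gs P) \<in> Hval k P w ` Gs P" using Hf LH Lne by (intro Max_in) auto
    then have c: "Max (Hval k P w ` Gs P) \<in> ?L \<or> Max (Hval k P w ` Gs P) = -1" by (rule HL)
    obtain y where y: "y \<in> ?L" using Lne by auto
    have "0 \<le> y" using y tlen_nonneg by auto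
    also have "y \<le> Max ?L" using Lf y by simp
    finally have "0 \<le> Max ?L" .
    then show ?thesis using c Lf by auto
  qed
  moreover have "Max ?L \<le> Max (Hval k P w ` Gs P)"
    using Lne Lf Hf LH by (intro Max_mono) auto
  ultimately show ?thesis unfolding opt_alt by simp
qed

lemma opt_image_meas:
  assumes P: "finite P"
    and vm[measurable]: "\<And>p i. (\<lambda>\<omega>. v \<omega> p i) \<in> borel_measurable M"
    and v0: "\<And>\<omega> p i. k \<le> i \<Longrightarrow> v \<omega> p i = 0"
  shows "(\<lambda>\<omega>. opt_max_tsp k (v \<omega> ` P)) \<in> borel_measurable M"
proof -
  have eqf: "v \<omega> p = v \<omega> q \<longleftrightarrow> (\<forall>l\<in>{..<k}. v \<omega> p l = v \<omega> q l)" for \<omega> p q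
    apply (auto simp: fun_eq_iff)
    subgoal for x by (cases "x < k") (auto simp: v0)
    done
  have "(\<lambda>\<omega>. Hval k P (v \<omega>) ng) \<in> borel_measurable M" if ng: "ng \<in> Gs P" for ng
  proof -
    obtain n g where ngd: "ng = (n, g)" by (cases ng)
    have gP: "g i \<in> P" if "i < n" for i using ng that by (auto simp: ngd Gs_def)
    have gd: "goodg P (v \<omega>) n g \<longleftrightarrow>
      (\<forall>a\<in>{..<n}. \<forall>b\<in>{..<n}. (\<forall>l\<in>{..<k}. v \<omega> (g a) l = v \<omega> (g b) l) \<longrightarrow> a = b) \<and>
      (\<forall>p\<in>P. \<exists>a\<in>{..<n}. \<forall>l\<in>{..<k}. v \<omega> (g a) l = v \<omega> p l)" for \<omega>
    proof -
      have "inj_on (\<lambda>i. v \<omega> (g i)) {..<n} \<longleftrightarrow>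
        (\<forall>a\<in>{..<n}. \<forall>b\<in>{..<n}. (\<forall>l\<in>{..<k}. v \<omega> (g a) l = v \<omega> (g b) l) \<longrightarrow> a = b)"
        unfolding inj_on_def eqf[symmetric] by simp
      moreover have "(\<lambda>i. v \<omega> (g i)) ` {..<n} = v \<omega> ` P \<longleftrightarrow>
        (\<forall>p\<in>P. \<exists>a\<in>{..<n}. \<forall>l\<in>{..<k}. v \<omega> (g a) l = v \<omega> p l)"
      proof -
        have sub: "(\<lambda>i. v \<omega> (g i)) ` {..<n} \<subseteq> v \<omega> ` P" using gP by auto
        have "(\<lambda>i. v \<omega> (g i)) ` {..<n} = v \<omega> ` P \<longleftrightarrow> (\<forall>p\<in>P. \<exists>a\<in>{..<n}. v \<omega> (g a) = v \<omega> p)"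
        proof
          assume "(\<lambda>i. v \<omega> (g i)) ` {..<n} = v \<omega> ` P"
          then show "\<forall>p\<in>P. \<exists>a\<in>{..<n}. v \<omega> (g a) = v \<omega> p"
            by (metis (no_types, lifting) image_eqI imageE)
        next
          assume h: "\<forall>p\<in>P. \<exists>a\<in>{..<n}. v \<omega> (g a) = v \<omega> p"
          have "v \<omega> ` P \<subseteq> (\<lambda>i. v \<omega> (g i)) ` {..<n}"
          proof
            fix y assume "y \<in> v \<omega> ` P"
            then obtain p where "p \<in> P" "y = v \<omega> p" by auto
            then obtain a where "a \<in> {..<n}" "v \<omega> (g a) = y" using h by metis
            then show "y \<in> (\<lambda>i. v \<omega> (g i)) ` {..<n}" by blast
          qed
          then show "(\<lambda>i. v \<omega> (g i)) ` {..<n} = v \<omega> ` P" using sub by blast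
        qed
        then show ?thesis unfolding eqf by simp
      qed
      ultimately show ?thesis by (simp add: goodg_def)
    qed
    have "(\<lambda>\<omega>. Hval k P (v \<omega>) ng) = (\<lambda>\<omega>. if
      (\<forall>a\<in>{..<n}. \<forall>b\<in>{..<n}. (\<forall>l\<in>{..<k}. v \<omega> (g a) l = v \<omega> (g b) l) \<longrightarrow> a = b) \<and>
      (\<forall>p\<in>P. \<exists>a\<in>{..<n}. \<forall>l\<in>{..<k}. v \<omega> (g a) l = v \<omega> p l)
      then (\<Sum>i<n. sqrt (\<Sum>l<k. (v \<omega> (g i) l - v \<omega> (g (Suc i mod n)) l)\<^sup>2)) else -1)"
      unfolding Hval_def ngd gd tlen_def edist_def fst_conv snd_conv ..
    also have "\<dots> \<in> borel_measurable M"
      using P by measurable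
    finally show ?thesis .
  qed
  then have "(\<lambda>\<omega>. Max ((\<lambda>ng. Hval k P (v \<omega>) ng) ` Gs P)) \<in> borel_measurable M"
    using Gs_finite[OF P] by (intro borel_measurable_Max) auto
  moreover have "(\<lambda>\<omega>. opt_max_tsp k (v \<omega> ` P)) = (\<lambda>\<omega>. Max ((\<lambda>ng. Hval k P (v \<omega>) ng) ` Gs P))"
    using opt_image_formula[OF P] by auto
  ultimately show ?thesis by simp
qed



lemma sqrt_dev:
  fixes a Y \<eta> :: real
  assumes a: "0 < a" and Y: "0 \<le> Y" and e: "0 < \<eta>"
  shows "\<bar>sqrt Y - a\<bar> \<le> \<eta> * a / 2 + (Y - a\<^sup>2)\<^sup>2 / (2 * \<eta> * a ^ 3)"
proof -
  define z where "z = \<bar>Y - a\<^sup>2\<bar> / a"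
  have sY: "0 \<le> sqrt Y" using Y by simp
  have h1: "\<bar>sqrt Y - a\<bar> * (sqrt Y + a) = \<bar>Y - a\<^sup>2\<bar>"
  proof -
    have "(sqrt Y - a) * (sqrt Y + a) = Y - a\<^sup>2" using Y by (simp add: algebra_simps power2_eq_square)
    then have "\<bar>(sqrt Y - a) * (sqrt Y + a)\<bar> = \<bar>Y - a\<^sup>2\<bar>" by simp
    then show ?thesis using sY a by (simp add: abs_mult)
  qed
  have h2: "\<bar>sqrt Y - a\<bar> * a \<le> \<bar>Y - a\<^sup>2\<bar>"
  proof -
    have "\<bar>sqrt Y - a\<bar> * a \<le> \<bar>sqrt Y - a\<bar> * (sqrt Y + a)"
      using sY by (intro mult_left_mono) auto
    then show ?thesis using h1 by simp
  qed
  have h3: "\<bar>sqrt Y - a\<bar> \<le> z" unfolding z_def using h2 a by (simp add: pos_le_divide_eq)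
  have h4: "2 * (\<eta> * a) * z \<le> (\<eta> * a)\<^sup>2 + z\<^sup>2" by (rule sum_squares_bound)
  have ea: "0 < \<eta> * a" using a e by simp
  have h5: "z \<le> \<eta> * a / 2 + z\<^sup>2 / (2 * (\<eta> * a))"
  proof -
    have "z = (2 * (\<eta> * a) * z) / (2 * (\<eta> * a))" using a e by simp
    also have "\<dots> \<le> ((\<eta> * a)\<^sup>2 + z\<^sup>2) / (2 * (\<eta> * a))"
      using h4 ea by (intro divide_right_mono) auto
    also have "\<dots> = \<eta> * a / 2 + z\<^sup>2 / (2 * (\<eta> * a))"
      using ea by (simp add: add_divide_distrib power2_eq_square)
    finally show ?thesis .
  qed
  have h6: "z\<^sup>2 / (2 * (\<eta> * a)) = (Y - a\<^sup>2)\<^sup>2 / (2 * \<eta> * a ^ 3)"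
    unfolding z_def using a e by (simp add: power_divide power2_abs field_simps power3_eq_cube power2_eq_square)
  show ?thesis using h3 h5 h6 by simp
qed

lemma mat_apply_out: "t \<le> i \<Longrightarrow> mat_apply t d G p i = 0"
  by (simp add: mat_apply_def)

lemma mat_apply_diff: "i < t \<Longrightarrow> mat_apply t d G p i - mat_apply t d G q i = rowv d (\<lambda>j. p j - q j) i G"
  by (simp add: mat_apply_def rowv_def sum_subtractf right_diff_distrib)

lemma edist_nrm: "edist d p q = nrm d (\<lambda>j. p j - q j)"
  by (simp add: edist_def nrm_def)

context gjl
begin

lemma edist_mat: "edist t (mat_apply t d G p) (mat_apply t d G q) = sqrt (Yv (\<lambda>j. p j - q j) G)"
  unfolding edist_def Yv_def by (simp add: mat_apply_diff)

lemma mat_meas: "(\<lambda>G. mat_apply t d G p i) \<in> borel_measurable (gauss_jl t d)"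
proof (cases "i < t")
  case True
  then have "(\<lambda>G. mat_apply t d G p i) = rowv d p i" by (simp add: fun_eq_iff mat_apply_def rowv_def)
  then show ?thesis by simp
next
  case False then show ?thesis by (simp add: mat_apply_def)
qed

lemma Yv_nonneg: "0 \<le> Yv x G" unfolding Yv_def by (simp add: sum_nonneg)

lemma core_det:
  fixes \<epsilon> A :: real and P :: "(nat \<Rightarrow> real) set"
  assumes e: "0 < \<epsilon>" "\<epsilon> < 1" and P: "finite P" "card P \<ge> 3"
    and A: "A = Dsum d P" "0 < A"
    and inj: "inj_on (\<lambda>p. mat_apply t d G p) P"
    and dev: "\<bar>Dsum t ((\<lambda>p. mat_apply t d G p) ` P) - A\<bar> \<le> \<epsilon> * A / 4"
  shows "opt_max_tsp d P / (2 + \<epsilon>) \<le> opt_max_tsp t (mat_apply t d G ` P) \<and>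
         opt_max_tsp t (mat_apply t d G ` P) \<le> (2 + \<epsilon>) * opt_max_tsp d P"
proof -
  let ?Q = "(\<lambda>p. mat_apply t d G p) ` P"
  define m where "m = real (card P)"
  have cQ: "card ?Q = card P" using card_image[OF inj] .
  have m3: "3 \<le> m" using P(2) unfolding m_def by simp
  have Qf: "finite ?Q" using P(1) by simp
  define DQ where "DQ = Dsum t ?Q"
  define x where "x = A / m"
  define y where "y = DQ / m"
  have xpos: "0 < x" unfolding x_def using A m3 by simp
  have DQnn: "0 \<le> DQ" unfolding DQ_def Dsum_def by (intro sum_nonneg) (simp add: edist_nonneg)
  have yl: "(1 - \<epsilon>/4) * x \<le> y" and yu: "y \<le> (1 + \<epsilon>/4) * x"
  proof -
    have d0: "DQ - A \<le> \<epsilon>*A/4" "-(DQ - A) \<le> \<epsilon>*A/4"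
      using abs_le_D1[OF dev] abs_le_D2[OF dev] unfolding DQ_def by auto
    have d1: "A - \<epsilon>*A/4 \<le> DQ" "DQ \<le> A + \<epsilon>*A/4" using d0 by linarith+
    have e1: "(1 - \<epsilon>/4) * A = A - \<epsilon>*A/4" "(1 + \<epsilon>/4) * A = A + \<epsilon>*A/4" by (simp_all add: algebra_simps)
    have f1: "(1 - \<epsilon>/4) * A \<le> DQ" "DQ \<le> (1 + \<epsilon>/4) * A"
      unfolding e1 by (rule d1(1), rule d1(2))
    have mp: "0 < m" using m3 by simp
    have "(1 - \<epsilon>/4) * A / m \<le> DQ / m" using f1(1) mp by (rule divide_right_mono[OF _ less_imp_le])
    then show "(1 - \<epsilon>/4) * x \<le> y" unfolding x_def y_def by simp
    have "DQ / m \<le> (1 + \<epsilon>/4) * A / m" using f1(2) mp by (rule divide_right_mono[OF _ less_imp_le])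
    then show "y \<le> (1 + \<epsilon>/4) * x" unfolding x_def y_def by simp
  qed
  have oPu: "opt_max_tsp d P \<le> 2 * x"
    using opt_upper[OF P(1), of d] P(2) unfolding x_def m_def A(1) by simp
  have oQu: "opt_max_tsp t ?Q \<le> 2 * y"
    using opt_upper[OF Qf, of t] P(2) cQ unfolding y_def m_def DQ_def by simp
  have oPl: "x \<le> opt_max_tsp d P"
  proof -
    have "A / m \<le> A / (m - 1)" using A m3 by (intro divide_left_mono) auto
    also have "\<dots> \<le> opt_max_tsp d P" using opt_lower[OF P(1), of d] P(2) unfolding A(1) m_def by simp
    finally show ?thesis unfolding x_def .
  qed
  have oQl: "y \<le> opt_max_tsp t ?Q"
  proof -
    have "DQ / m \<le> DQ / (m - 1)" using DQnn m3 by (intro divide_left_mono) auto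
    also have "\<dots> \<le> opt_max_tsp t ?Q" using opt_lower[OF Qf, of t] P(2) cQ unfolding DQ_def m_def by simp
    finally show ?thesis unfolding y_def .
  qed
  have up: "opt_max_tsp t ?Q \<le> (2 + \<epsilon>) * opt_max_tsp d P"
  proof -
    have "opt_max_tsp t ?Q \<le> 2 * ((1 + \<epsilon>/4) * x)" using oQu yu by linarith
    also have "\<dots> = (2 + \<epsilon>/2) * x" by (simp add: algebra_simps)
    also have "\<dots> \<le> (2 + \<epsilon>/2) * opt_max_tsp d P" using oPl e by (intro mult_left_mono) auto
    also have "\<dots> \<le> (2 + \<epsilon>) * opt_max_tsp d P" using oPl xpos e by (intro mult_right_mono) auto
    finally show ?thesis .
  qed
  have lo: "opt_max_tsp d P / (2 + \<epsilon>) \<le> opt_max_tsp t ?Q"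
  proof -
    have ep: "0 < 2 + \<epsilon>" using e by simp
    have key: "2 \<le> (2 + \<epsilon>) * (1 - \<epsilon>/4)"
    proof -
      have "\<epsilon> * \<epsilon> \<le> \<epsilon> * 2" using e by (intro mult_left_mono) auto
      then show ?thesis by (simp add: algebra_simps)
    qed
    have "opt_max_tsp d P / (2 + \<epsilon>) \<le> 2 * x / (2 + \<epsilon>)" using oPu ep by (intro divide_right_mono) auto
    also have "\<dots> \<le> (1 - \<epsilon>/4) * x"
    proof -
      have "2 * x \<le> ((2 + \<epsilon>) * (1 - \<epsilon>/4)) * x" using key xpos by (intro mult_right_mono) auto
      then show ?thesis using ep by (simp add: pos_divide_le_eq mult.commute mult.left_commute)
    qed
    also have "\<dots> \<le> y" by (rule yl)
    also have "\<dots> \<le> opt_max_tsp t ?Q" by (rule oQl)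
    finally show ?thesis .
  qed
  show ?thesis using up lo by simp
qed

end



context gjl
begin

lemma main_fixed:
  fixes \<epsilon> :: real and P :: "(nat \<Rightarrow> real) set"
  assumes e: "0 < \<epsilon>" "\<epsilon> < 1" and P: "finite P" "card P \<ge> 3" "P \<subseteq> vecs d"
    and tb: "288 / \<epsilon>\<^sup>2 \<le> real t"
  shows "2/3 \<le> measure (gauss_jl t d) {G \<in> space (gauss_jl t d).
           opt_max_tsp d P / (2 + \<epsilon>) \<le> opt_max_tsp t (mat_apply t d G ` P) \<and>
           opt_max_tsp t (mat_apply t d G ` P) \<le> (2 + \<epsilon>) * opt_max_tsp d P}"
    (is "_ \<le> measure _ ?S")
proof -
  let ?M = "gauss_jl t d"
  define E where "E = {e \<in> P \<times> P. fst e \<noteq> snd e}"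
  define xv where "xv e = (\<lambda>j. fst e j - snd e j)" for e :: "(nat \<Rightarrow> real) \<times> (nat \<Rightarrow> real)"
  define a where "a e = edist d (fst e) (snd e)" for e :: "(nat \<Rightarrow> real) \<times> (nat \<Rightarrow> real)"
  define \<eta> :: real where "\<eta> = \<epsilon> / 12"
  have eta: "0 < \<eta>" using e by (simp add: \<eta>_def)
  have Ef: "finite E" using P(1) unfolding E_def by simp
  have a_nrm: "a e = nrm d (xv e)" for e unfolding a_def xv_def by (rule edist_nrm)
  have a_pos: "0 < a e" if eE: "e \<in> E" for e
  proof -
    obtain p q where pq: "e = (p, q)" "p \<in> P" "q \<in> P" "p \<noteq> q" using eE unfolding E_def by (cases e) auto
    then obtain j where j: "p j \<noteq> q j" by (auto simp: fun_eq_iff)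
    have "j < d"
    proof (rule ccontr)
      assume "\<not> j < d"
      then have "p j = 0" "q j = 0" using P(3) pq unfolding vecs_def by auto
      then show False using j by simp
    qed
    then have "0 < (\<Sum>i<d. (p i - q i)\<^sup>2)"
      using j by (intro sum_pos2[where i=j]) auto
    then show ?thesis unfolding a_def edist_def pq by simp
  qed
  define T where "T e G = \<eta> * a e / 2 + (Yv (xv e) G - (a e)\<^sup>2)\<^sup>2 / (2 * \<eta> * (a e) ^ 3)" for e G
  define V where "V G = (\<Sum>e\<in>E. T e G)" for G
  have Tint: "integrable ?M (T e)" if "e \<in> E" for e
  proof -
    have "integrable ?M (\<lambda>G. (Yv (xv e) G - (nrm d (xv e))\<^sup>2)\<^sup>2)"
      using a_pos[OF that] unfolding a_nrm by (rule Y_second_moment(1))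
    then show ?thesis unfolding T_def a_nrm[symmetric] by simp
  qed
  have ET: "expectation (T e) = a e * (\<eta> / 2 + 1 / (\<eta> * t))" if "e \<in> E" for e
  proof -
    have ap: "0 < a e" using a_pos[OF that] .
    have I: "integrable ?M (\<lambda>G. (Yv (xv e) G - (a e)\<^sup>2)\<^sup>2)"
      using a_pos[OF that] unfolding a_nrm by (rule Y_second_moment(1))
    have X: "expectation (\<lambda>G. (Yv (xv e) G - (a e)\<^sup>2)\<^sup>2) = 2 * (a e)^4 / t"
      using a_pos[OF that] unfolding a_nrm by (rule Y_second_moment(2))
    have "expectation (T e) = \<eta> * a e / 2 + (2 * (a e)^4 / t) / (2 * \<eta> * (a e) ^ 3)"
      unfolding T_def using I X by (simp add: prob_space)
    also have "\<dots> = a e * (\<eta> / 2 + 1 / (\<eta> * t))"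
      using ap eta tpos by (simp add: field_simps power3_eq_cube power4_eq_xxxx)
    finally show ?thesis .
  qed
  have Vint: "integrable ?M V" unfolding V_def using Tint by (rule Bochner_Integration.integrable_sum) auto
  define A where "A = Dsum d P"
  have A_E: "A = (\<Sum>e\<in>E. a e)"
  proof -
    have "A = (\<Sum>e\<in>P \<times> P. a e)" unfolding A_def Dsum_def a_def by (simp add: sum.cartesian_product case_prod_beta)
    also have "\<dots> = (\<Sum>e\<in>E. a e)"
      using P(1) by (intro sum.mono_neutral_right) (auto simp: E_def a_def)
    finally show ?thesis .
  qed
  have Epos: "E \<noteq> {}"
  proof -
    have "2 \<le> card P" using P(2) by simp
    then have "\<not> (\<forall>x\<in>P. \<forall>y\<in>P. x = y)" using card_le_Suc0_iff_eq[OF P(1)] by auto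
    then obtain p q where "p \<in> P" "q \<in> P" "p \<noteq> q" by blast
    then show ?thesis unfolding E_def by auto
  qed
  have Apos: "0 < A" unfolding A_E using Ef Epos a_pos by (intro sum_pos) auto
  have EV: "expectation V = A * (\<eta> / 2 + 1 / (\<eta> * t))"
  proof -
    have "expectation V = (\<Sum>e\<in>E. expectation (T e))"
      unfolding V_def by (rule Bochner_Integration.integral_sum) (use Tint in auto)
    also have "\<dots> = (\<Sum>e\<in>E. a e * (\<eta> / 2 + 1 / (\<eta> * t)))" using ET by simp
    finally show ?thesis unfolding A_E by (simp add: sum_distrib_right)
  qed
  have coef: "\<eta> / 2 + 1 / (\<eta> * t) \<le> \<epsilon> / 12"
  proof -
    have "288 \<le> \<epsilon>\<^sup>2 * t" using tb e by (simp add: divide_le_eq mult.commute)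
    then have "1 / (\<eta> * t) \<le> \<epsilon> / 24"
      using e tpos unfolding \<eta>_def by (simp add: field_simps power2_eq_square)
    then show ?thesis unfolding \<eta>_def by simp
  qed
  have EVle: "expectation V \<le> \<epsilon> * A / 12"
    unfolding EV using coef Apos by (simp add: mult_left_mono[of _ _ A, simplified mult.commute] mult.commute)
  have Tnn: "0 \<le> T e G" if "e \<in> E" for e G
    unfolding T_def using a_pos[OF that] eta by (intro add_nonneg_nonneg divide_nonneg_nonneg) auto
  have Vnn: "0 \<le> V G" for G unfolding V_def using Tnn by (simp add: sum_nonneg)
  have Vmeas: "V \<in> borel_measurable ?M" using Vint by (rule borel_measurable_integrable)
  define c where "c = \<epsilon> * A / 4"
  have cpos: "0 < c" unfolding c_def using e Apos by simp
  have Markov: "measure ?M {G \<in> space ?M. c \<le> V G} \<le> 1/3"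
  proof -
    have "measure ?M {G \<in> space ?M. c \<le> V G} \<le> expectation V / c"
      using Vint cpos Vnn by (intro integral_Markov_inequality_measure[where A="space ?M"]) auto
    also have "\<dots> \<le> (\<epsilon> * A / 12) / c" using EVle cpos by (intro divide_right_mono) auto
    also have "\<dots> = 1/3" unfolding c_def using e Apos by simp
    finally show ?thesis .
  qed
  define Vs where "Vs = {G \<in> space ?M. V G < c}"
  have Vs_sets: "Vs \<in> sets ?M" unfolding Vs_def using Vmeas by measurable
  have mVs: "2/3 \<le> measure ?M Vs"
  proof -
    have "Vs = space ?M - {G \<in> space ?M. c \<le> V G}" unfolding Vs_def by auto
    then have "measure ?M Vs = 1 - measure ?M {G \<in> space ?M. c \<le> V G}"
      using Vmeas by (simp add: prob_compl)
    then show ?thesis using Markov by simp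
  qed
  define Nul where "Nul = (\<Union>e\<in>E. {G \<in> space ?M. rowv d (xv e) 0 G = 0})"
  have Nul_null: "Nul \<in> null_sets ?M"
    unfolding Nul_def using Ef a_pos a_nrm
    by (intro null_sets_UN' countable_finite row_null) auto
  have mGood: "measure ?M (Vs - Nul) = measure ?M Vs"
    using Vs_sets Nul_null by (rule measure_Diff_null_set)
  have OQm: "(\<lambda>G. opt_max_tsp t (mat_apply t d G ` P)) \<in> borel_measurable ?M"
    using opt_image_meas[OF P(1), where v="\<lambda>G p. mat_apply t d G p" and k=t and M="?M"]
    by (simp add: mat_meas mat_apply_out)
  have S_sets: "?S \<in> sets ?M" using OQm by measurable
  have sub: "Vs - Nul \<subseteq> ?S"
  proof
    fix G assume G: "G \<in> Vs - Nul"
    then have Gs: "G \<in> space ?M" and VG: "V G < c" unfolding Vs_def by auto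
    have nz: "rowv d (xv e) 0 G \<noteq> 0" if "e \<in> E" for e using G that unfolding Nul_def Vs_def by auto
    have inj: "inj_on (\<lambda>p. mat_apply t d G p) P"
    proof (rule inj_onI)
      fix p q assume pq: "p \<in> P" "q \<in> P" "mat_apply t d G p = mat_apply t d G q"
      show "p = q"
      proof (rule ccontr)
        assume "p \<noteq> q"
        then have "(p, q) \<in> E" using pq unfolding E_def by auto
        then have "rowv d (\<lambda>j. p j - q j) 0 G \<noteq> 0" using nz unfolding xv_def by fastforce
        moreover have "mat_apply t d G p 0 - mat_apply t d G q 0 = rowv d (\<lambda>j. p j - q j) 0 G"
          using tpos by (rule mat_apply_diff)
        ultimately show False using pq(3) by simp
      qed
    qed
    have DQ: "Dsum t ((\<lambda>p. mat_apply t d G p) ` P) = (\<Sum>e\<in>E. sqrt (Yv (xv e) G))"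
    proof -
      have "Dsum t ((\<lambda>p. mat_apply t d G p) ` P) = (\<Sum>p\<in>P. \<Sum>q\<in>P. edist t (mat_apply t d G p) (mat_apply t d G q))"
        unfolding Dsum_def by (simp add: sum.reindex[OF inj])
      also have "\<dots> = (\<Sum>e\<in>P \<times> P. sqrt (Yv (xv e) G))"
        by (simp add: sum.cartesian_product edist_mat xv_def case_prod_beta)
      also have "\<dots> = (\<Sum>e\<in>E. sqrt (Yv (xv e) G))"
        using P(1) by (intro sum.mono_neutral_right) (auto simp: E_def xv_def Yv_def rowv_def)
      finally show ?thesis .
    qed
    have dev: "\<bar>Dsum t ((\<lambda>p. mat_apply t d G p) ` P) - A\<bar> \<le> \<epsilon> * A / 4"
    proof -
      have "\<bar>Dsum t ((\<lambda>p. mat_apply t d G p) ` P) - A\<bar> = \<bar>\<Sum>e\<in>E. sqrt (Yv (xv e) G) - a e\<bar>"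
        unfolding DQ A_E by (simp add: sum_subtractf)
      also have "\<dots> \<le> (\<Sum>e\<in>E. \<bar>sqrt (Yv (xv e) G) - a e\<bar>)" by (rule sum_abs)
      also have "\<dots> \<le> V G" unfolding V_def T_def
        using a_pos eta Yv_nonneg by (intro sum_mono sqrt_dev) auto
      finally show ?thesis using VG unfolding c_def by simp
    qed
    have "opt_max_tsp d P / (2 + \<epsilon>) \<le> opt_max_tsp t (mat_apply t d G ` P) \<and>
         opt_max_tsp t (mat_apply t d G ` P) \<le> (2 + \<epsilon>) * opt_max_tsp d P"
      using core_det[OF e P(1,2) A_def Apos inj dev] by simp
    then show "G \<in> ?S" using Gs by simp
  qed
  have "measure ?M (Vs - Nul) \<le> measure ?M ?S"
    using sub S_sets by (rule finite_measure_mono)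
  then show ?thesis using mVs mGood by simp
qed

end



theorem mainTheorem14:
  "\<exists>C>0. \<forall>(\<epsilon>::real) (d::nat) (P::(nat \<Rightarrow> real) set).
     0 < \<epsilon> \<and> \<epsilon> < 1 \<and> finite P \<and> card P \<ge> 3 \<and> P \<subseteq> vecs d \<longrightarrow>
     (let t = nat \<lceil>C * \<epsilon> powr (-2) * ln (2 / \<epsilon>)\<rceil> in
      measure (gauss_jl t d)
        {G \<in> space (gauss_jl t d).
           opt_max_tsp d P / (2 + \<epsilon>) \<le> opt_max_tsp t (mat_apply t d G ` P) \<and>
           opt_max_tsp t (mat_apply t d G ` P) \<le> (2 + \<epsilon>) * opt_max_tsp d P}
      \<ge> 2 / 3)"
proof (intro exI[of _ "500::real"] conjI allI impI)
  fix \<epsilon> :: real and d :: nat and P :: "(nat \<Rightarrow> real) set"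
  assume H: "0 < \<epsilon> \<and> \<epsilon> < 1 \<and> finite P \<and> card P \<ge> 3 \<and> P \<subseteq> vecs d"
  then have e: "0 < \<epsilon>" "\<epsilon> < 1" and P: "finite P" "card P \<ge> 3" "P \<subseteq> vecs d" by auto
  define v where "v = 500 * \<epsilon> powr (-2) * ln (2 / \<epsilon>)"
  define t where "t = nat \<lceil>v\<rceil>"
  have pw: "\<epsilon> powr (-2) = 1 / \<epsilon>\<^sup>2" using e by (simp add: powr_minus divide_inverse)
  have l2: "2/3 \<le> ln (2 / \<epsilon>)"
  proof -
    have "2 \<le> 2 / \<epsilon>" using e by (simp add: le_divide_eq)
    then have "ln 2 \<le> ln (2 / \<epsilon>)" using e by (subst ln_le_cancel_iff) auto
    then show ?thesis using ln2_ge_two_thirds by linarith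
  qed
  have e2: "0 < \<epsilon>\<^sup>2" using e by simp
  have vb: "288 / \<epsilon>\<^sup>2 \<le> v"
  proof -
    have "288 / \<epsilon>\<^sup>2 \<le> (500 * (2/3)) / \<epsilon>\<^sup>2" using e2 by (intro divide_right_mono) auto
    also have "\<dots> \<le> (500 * ln (2 / \<epsilon>)) / \<epsilon>\<^sup>2" using e2 l2 by (intro divide_right_mono) auto
    also have "\<dots> = v" unfolding v_def pw by simp
    finally show ?thesis .
  qed
  have tv: "v \<le> real t" unfolding t_def by (rule real_nat_ceiling_ge)
  have tb: "288 / \<epsilon>\<^sup>2 \<le> real t" using vb tv by linarith
  have tpos: "0 < t"
  proof -
    have "0 < 288 / \<epsilon>\<^sup>2" using e2 by simp
    then have "0 < real t" using tb by linarith
    then show ?thesis by simp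
  qed
  interpret gjl t d by unfold_locales (rule tpos)
  show "let t = nat \<lceil>500 * \<epsilon> powr (-2) * ln (2 / \<epsilon>)\<rceil> in
      measure (gauss_jl t d)
        {G \<in> space (gauss_jl t d).
           opt_max_tsp d P / (2 + \<epsilon>) \<le> opt_max_tsp t (mat_apply t d G ` P) \<and>
           opt_max_tsp t (mat_apply t d G ` P) \<le> (2 + \<epsilon>) * opt_max_tsp d P}
      \<ge> 2 / 3"
    unfolding Let_def v_def[symmetric] t_def[symmetric]
    using main_fixed[OF e P tb] by simp
qed simp


end
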